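(* For every fixed $i\ge0$, as $n\to\infty$ the power series $D_{n-i}(z)/D_n(z)$ converge (coefficientwise, as formal power series in $z$) to $(1-t)^{-2i}$, where $t$ is the power series with $z^3=t(1-t)^2$, $t=z^3+O(z^6)$.
   Context: For $h\ge1$, $D_h=D_h(z)$ is the determinant of the $h\times h$ matrix $T_h$ (rows/columns indexed $0,\dots,h-1$) with entries $(T_h)_{p,p}=1$, $(T_h)_{p,p+1}=-2z$, $(T_h)_{p,p+2}=z^2$, $(T_h)_{p+1,p}=-z^2$, and all other entries $0$; $D_0=1$. Each $D_h$ is a polynomial in $z^3$ with constant term $1$. *)

theory Defs
  imports "HOL-Computational_Algebra.Formal_Power_Series" "Jordan_Normal_Form.Determinant"
begin

definition T_mat :: "nat \<Rightarrow> rat fps mat" where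
  "T_mat h = mat h h (\<lambda>(p, q).
      if q = p then 1
      else if q = p + 1 then - 2 * fps_X
      else if q = p + 2 then fps_X ^ 2
      else if p = q + 1 then - (fps_X ^ 2)
      else 0)"

definition D :: "nat \<Rightarrow> rat fps" where
  "D h = (if h = 0 then 1 else det (T_mat h))"

end

theory Submission imports Defs begin

lemma md_entry: "i' < dim_row A - 1 \<Longrightarrow> j' < dim_col A - 1 \<Longrightarrow>
  mat_delete A i j $$ (i',j') = A $$ (if i'<i then i' else Suc i', if j'<j then j' else Suc j')"
  by (simp add: mat_delete_def)

lemma T_entry: "p < h \<Longrightarrow> q < h \<Longrightarrow> T_mat h $$ (p,q) =
      (if q = p then 1
      else if q = p + 1 then - 2 * fps_X
      else if q = p + 2 then fps_X ^ 2
      else if p = q + 1 then - (fps_X ^ 2)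
      else 0)"
  by (simp add: T_mat_def)

lemma T_carrier[simp]: "T_mat h \<in> carrier_mat h h" by (simp add: T_mat_def)
lemma T_dim[simp]: "dim_row (T_mat h) = h" "dim_col (T_mat h) = h" by (simp_all add: T_mat_def)

lemma sum_single: "(j::nat) < n \<Longrightarrow> (\<And>l. l<n \<Longrightarrow> l \<noteq> j \<Longrightarrow> f l = 0) \<Longrightarrow> (\<Sum>l<n. f l) = f j"
  by (subst sum.mono_neutral_right[of "{..<n}" "{j}"]) auto

lemma sum_two: "(j1::nat) < n \<Longrightarrow> j2 < n \<Longrightarrow> j1 \<noteq> j2 \<Longrightarrow> (\<And>l. l<n \<Longrightarrow> l \<noteq> j1 \<Longrightarrow> l \<noteq> j2 \<Longrightarrow> f l = 0) \<Longrightarrow> (\<Sum>l<n. f l) = f j1 + f j2"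
  by (subst sum.mono_neutral_right[of "{..<n}" "{j1,j2}"]) auto

lemma del_last: "mat_delete (T_mat (Suc h)) h h = T_mat h"
  by (rule eq_matI) (simp_all add: md_entry T_entry)

lemma det_del1: "det (mat_delete (T_mat (Suc 0)) i j) = 1"
proof -
  have "dim_row (mat_delete (T_mat (Suc 0)) i j) = 0" "dim_col (mat_delete (T_mat (Suc 0)) i j) = 0"
    by (simp_all only: mat_delete_dim T_dim diff_Suc_1)
  then show ?thesis by (intro det_dim_zero) (simp only: carrier_mat_def mem_Collect_eq conj_absorb)
qed

lemma det_del2: "det (mat_delete (mat_delete (T_mat 2) i j) k l) = 1"
proof -
  have "dim_row (mat_delete (mat_delete (T_mat 2) i j) k l) = 0" "dim_col (mat_delete (mat_delete (T_mat 2) i j) k l) = 0"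
    by (simp_all only: mat_delete_dim T_dim numeral_2_eq_2 diff_Suc_1)
  then show ?thesis by (intro det_dim_zero) (simp only: carrier_mat_def mem_Collect_eq conj_absorb)
qed

lemma D_eq: "D h = det (T_mat h)"
  by (simp add: D_def)

lemma D1: "D 1 = 1"
proof -
  have "det (T_mat 1) = (\<Sum>j<1. T_mat 1 $$ (0,j) * cofactor (T_mat 1) 0 j)"
    by (rule laplace_expansion_row) simp_all
  also have "\<dots> = 1" by (simp add: cofactor_def T_entry det_del1)
  finally show ?thesis by (simp add: D_eq)
qed

lemma step1: "det (T_mat (Suc (Suc h))) = det (T_mat (Suc h)) + fps_X^2 * det (mat_delete (T_mat (Suc (Suc h))) (Suc h) h)"
proof -
  let ?A = "T_mat (Suc (Suc h))"
  have "det ?A = (\<Sum>j<Suc (Suc h). ?A $$ (Suc h,j) * cofactor ?A (Suc h) j)"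
    by (rule laplace_expansion_row) simp_all
  also have "\<dots> = ?A $$ (Suc h,Suc h) * cofactor ?A (Suc h) (Suc h) + ?A $$ (Suc h,h) * cofactor ?A (Suc h) h"
    by (rule sum_two) (simp_all add: T_entry)
  also have "\<dots> = det (T_mat (Suc h)) + fps_X^2 * det (mat_delete ?A (Suc h) h)"
    using del_last[of "Suc h"] by (simp add: cofactor_def T_entry)
  finally show ?thesis .
qed

lemma det1x1: "(A :: rat fps mat) \<in> carrier_mat (Suc 0) (Suc 0) \<Longrightarrow> det A = A $$ (0,0)"
proof -
  assume A: "A \<in> carrier_mat (Suc 0) (Suc 0)"
  have "det A = (\<Sum>j<Suc 0. A $$ (0,j) * cofactor A 0 j)"
    by (rule laplace_expansion_row[OF A]) simp
  also have "\<dots> = A $$ (0,0) * cofactor A 0 0" by simp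
  also have "cofactor A 0 0 = 1" unfolding cofactor_def
    by (simp add: det_dim_zero mat_delete_carrier[OF A, simplified])
  finally show ?thesis by simp
qed

lemma carrier_gen: "mat_delete (T_mat (Suc (Suc h))) (Suc h) h \<in> carrier_mat (Suc h) (Suc h)"
  by (simp only: carrier_mat_def mem_Collect_eq mat_delete_dim T_dim diff_Suc_1 simp_thms)

lemma entry_gen: "mat_delete (T_mat (Suc (Suc h))) (Suc h) h $$ (h,h) = - 2 * fps_X"
  by (simp add: md_entry T_entry)

lemma D2: "D 2 = 1 - 2 * fps_X^3"
proof -
  have M0: "det (mat_delete (T_mat (Suc (Suc 0))) (Suc 0) 0) = - 2 * fps_X"
    using det1x1[OF carrier_gen[of 0]] entry_gen[of 0] by (simp only:)
  have "D 2 = det (T_mat (Suc 0)) + fps_X^2 * (- 2 * fps_X)"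
    using step1[of 0] unfolding M0 D_eq numeral_2_eq_2 .
  also have "det (T_mat (Suc 0)) = 1" using D1 unfolding D_eq by simp
  finally show ?thesis by (simp add: eval_nat_numeral mult_ac)
qed

lemma detN: "det (mat_delete (mat_delete (T_mat (g+3)) (g+2) (g+1)) g (g+1)) = - (fps_X^2) * D g"
proof -
  let ?N = "mat_delete (mat_delete (T_mat (g+3)) (g+2) (g+1)) g (g+1)"
  have c: "?N \<in> carrier_mat (g+1) (g+1)" by (simp only: carrier_mat_def mem_Collect_eq mat_delete_dim T_dim) simp
  have "det ?N = (\<Sum>j<g+1. ?N $$ (g,j) * cofactor ?N g j)"
    by (rule laplace_expansion_row[OF c]) simp_all
  also have "\<dots> = ?N $$ (g,g) * cofactor ?N g g"
    by (rule sum_single) (simp_all add: md_entry T_entry)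
  also have "mat_delete ?N g g = T_mat g"
    by (rule eq_matI) (simp_all add: md_entry T_entry)
  then have "?N $$ (g,g) * cofactor ?N g g = - (fps_X^2) * D g"
    by (simp add: cofactor_def md_entry T_entry D_eq)
  finally show ?thesis .
qed

lemma detM: "det (mat_delete (T_mat (g+3)) (g+2) (g+1)) = - 2 * fps_X * D (g+1) + fps_X^4 * D g"
proof -
  let ?M = "mat_delete (T_mat (g+3)) (g+2) (g+1)"
  have c: "?M \<in> carrier_mat (g+2) (g+2)" by (simp only: carrier_mat_def mem_Collect_eq mat_delete_dim T_dim) simp
  have "det ?M = (\<Sum>i<g+2. ?M $$ (i,g+1) * cofactor ?M i (g+1))"
    by (rule laplace_expansion_column[OF c]) simp_all
  also have "\<dots> = ?M $$ (g+1,g+1) * cofactor ?M (g+1) (g+1) + ?M $$ (g,g+1) * cofactor ?M g (g+1)"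
    by (rule sum_two) (simp_all add: md_entry T_entry)
  also have "mat_delete ?M (g+1) (g+1) = T_mat (g+1)"
    by (rule eq_matI) (simp_all add: md_entry T_entry)
  then have "?M $$ (g+1,g+1) * cofactor ?M (g+1) (g+1) + ?M $$ (g,g+1) * cofactor ?M g (g+1)
     = - 2 * fps_X * D (g+1) + fps_X^4 * D g"
    using detN[of g] by (simp add: cofactor_def md_entry T_entry D_eq power_add[symmetric])
  finally show ?thesis .
qed

lemma D_rec: "D (g+3) = D (g+2) - 2 * fps_X^3 * D (g+1) + fps_X^6 * D g"
proof -
  have "D (g+3) = D (g+2) + fps_X^2 * (- 2 * fps_X * D (g+1) + fps_X^4 * D g)"
    using step1[of "g+1"] detM[of g] by (simp add: D_eq eval_nat_numeral)
  then show ?thesis by (simp add: algebra_simps eval_nat_numeral)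
qed


lemma D0: "D 0 = 1" by (simp add: D_def)

lemma D_nth0: "fps_nth (D n) 0 = 1"
proof (induction n rule: less_induct)
  case (less n)
  show ?case
  proof (cases "n < 3")
    case True
    then have "n = 0 \<or> n = 1 \<or> n = 2" by auto
    then show ?thesis using D0 D1 D2 by auto
  next
    case False
    then obtain g where g: "n = g + 3" by (metis add.commute le_Suc_ex not_less)
    have e: "D n = D (g+2) - fps_X^3 * (2 * D (g+1)) + fps_X^6 * D g"
      using D_rec[of g] g by (simp add: mult_ac)
    have "fps_nth (D n) 0 = fps_nth (D (g+2)) 0 - fps_nth (fps_X^3 * (2 * D (g+1))) 0 + fps_nth (fps_X^6 * D g) 0"
      unfolding e by (simp only: fps_add_nth fps_sub_nth)
    also have "\<dots> = 1" using less[of "g+2"] g by (simp only: fps_X_power_mult_nth) simp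
    finally show ?thesis .
  qed
qed

definition sm :: "nat \<Rightarrow> rat fps \<Rightarrow> bool" where "sm m f \<longleftrightarrow> (\<exists>g. f = fps_X^m * g)"

lemma sm_nth: "sm m f \<Longrightarrow> k < m \<Longrightarrow> fps_nth f k = 0"
  unfolding sm_def by (auto simp: fps_X_power_mult_nth)

theorem mainTheorem4:
  fixes i :: nat and t :: "rat fps"
  assumes t_eq: "fps_X ^ 3 = t * (1 - t) ^ 2"
    and t_start: "\<forall>k<6. fps_nth t k = (if k = 3 then 1 else 0)"
  shows "\<forall>k. \<forall>\<^sub>F n in sequentially.
           fps_nth (D (n - i) / D n) k = fps_nth (inverse ((1 - t) ^ (2 * i))) k"
proof -
  define t' where "t' = fps_shift 3 t"
  have tt: "t = fps_X^3 * t'"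
    unfolding t'_def by (rule fps_ext) (use t_start in \<open>auto simp: fps_X_power_mult_nth\<close>)
  define r where "r = (1 - t)^2"
  define F where "F n = D (Suc n) - r * D n" for n
  have t0: "fps_nth t 0 = 0" using t_start by auto
  have r0: "fps_nth r 0 = 1" unfolding r_def by (simp add: fps_nth_power_0 t0)
  have Frec: "F (Suc (Suc n)) = - (t^2 - 2*t) * F (Suc n) - (t^2 * (1-t)^2) * F n" for n
  proof -
    have "D (n+3) = D (n+2) - 2 * (t * (1 - t) ^ 2) * D (n+1) + (t * (1 - t) ^ 2)^2 * D n"
      proof -
        have X6: "(fps_X::rat fps)^6 = (fps_X^3)^2" by (simp add: power_mult[symmetric])
        show ?thesis using D_rec[of n] unfolding X6 t_eq .
      qed
    then show ?thesis unfolding F_def r_def by (simp add: eval_nat_numeral) (simp add: algebra_simps)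
  qed
  have Fsm: "sm (3*n) (F n) \<and> sm (3*Suc n) (F (Suc n))" for n
  proof (induction n)
    case 0
    have "F 1 = fps_X^3 * (2*t' - 2 - fps_X^3 * t'^2)"
      unfolding F_def r_def using D1 D2[unfolded numeral_2_eq_2] tt by (simp add: algebra_simps power2_eq_square)
    then show ?case unfolding sm_def by auto
  next
    case (Suc n)
    then obtain g0 g1 where g0: "F n = fps_X^(3*n) * g0" and g1: "F (Suc n) = fps_X^(3*n) * fps_X^3 * g1"
      unfolding sm_def by (auto simp: power_add)
    have "F (Suc (Suc n)) = fps_X^(3*n) * fps_X^3 * fps_X^3 * (- (fps_X^3*t'^2 - 2*t') * g1 - t'^2 * (1-t)^2 * g0)"
      unfolding Frec g0 g1 by (subst (1 2 3) tt) (simp add: algebra_simps power2_eq_square)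
    then have "sm (3 * Suc (Suc n)) (F (Suc (Suc n)))"
      unfolding sm_def by (simp add: power_add mult.assoc)
    then show ?case using Suc by simp
  qed
  have Dsm: "sm (3*m) (D (m+j) - r^j * D m)" for m j
  proof (induction j)
    case 0
    then show ?case unfolding sm_def by (auto intro: exI[of _ 0])
  next
    case (Suc j)
    then obtain g where g: "D (m+j) - r^j * D m = fps_X^(3*m) * g" unfolding sm_def by auto
    obtain G where G: "F (m+j) = fps_X^(3*(m+j)) * G" using Fsm[of "m+j"] unfolding sm_def by auto
    have "D (m + Suc j) - r^Suc j * D m = F (m+j) + r * (D (m+j) - r^j * D m)"
      unfolding F_def by (simp add: algebra_simps)
    also have "\<dots> = fps_X^(3*m) * (fps_X^(3*j) * G + r * g)"
      unfolding G g by (simp add: power_add algebra_simps)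
    finally show ?case unfolding sm_def by blast
  qed
  show ?thesis
  proof
    fix k
    show "\<forall>\<^sub>F n in sequentially.
           fps_nth (D (n - i) / D n) k = fps_nth (inverse ((1 - t) ^ (2 * i))) k"
      unfolding eventually_sequentially
    proof (intro exI allI impI)
      fix n assume n: "i + k + 1 \<le> n"
      define m where "m = n - i"
      have nm: "n = m + i" and km: "k < 3*m" using n unfolding m_def by auto
      obtain g where g: "D (m+i) - r^i * D m = fps_X^(3*m) * g" using Dsm[of m i] unfolding sm_def by auto
      define R where "R = r^i"
      define B where "B = D (m+i)"
      have R0: "fps_nth R 0 \<noteq> 0" unfolding R_def by (simp add: fps_nth_power_0 r0)
      have B0: "fps_nth B 0 \<noteq> 0" unfolding B_def by (simp add: D_nth0)
      have RR: "R * inverse R = 1" using inverse_mult_eq_1'[OF R0] .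
      have BB: "B * inverse B = 1" using inverse_mult_eq_1'[OF B0] .
      have "D m * inverse B - inverse R = inverse R * inverse B * (R * D m - B)"
      proof -
        have "inverse R * inverse B * (R * D m - B) = (R * inverse R) * D m * inverse B - inverse R * (B * inverse B)"
          by (simp add: algebra_simps)
        then show ?thesis using RR BB by simp
      qed
      also have "\<dots> = fps_X^(3*m) * (- (inverse R * inverse B * g))"
        using g unfolding R_def B_def by (simp add: algebra_simps)
      finally have diff: "D m * inverse B - inverse R = fps_X^(3*m) * (- (inverse R * inverse B * g))" .
      have "fps_nth (D m * inverse B - inverse R) k = 0" unfolding diff using km by (simp add: fps_X_power_mult_nth)
      moreover have "D (n - i) / D n = D m * inverse B"
        unfolding B_def nm by (simp add: fps_divide_unit D_nth0)
      moreover have "inverse ((1 - t) ^ (2 * i)) = inverse R"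
        unfolding R_def r_def by (simp add: power_mult)
      ultimately show "fps_nth (D (n - i) / D n) k = fps_nth (inverse ((1 - t) ^ (2 * i))) k"
        by simp
    qed
  qed
qed

end
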